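(* Fix an integer base $B\ge 2$ and an integer $k\ge 0$. Assume Dickson's conjecture holds. Then for every positive integer $t$ there exists a positive integer $N$ such that $N, N+1, \ldots, N+t-1$ are all $k$-frugal.
   Context: For a positive integer $n$, $\delta(n)$ is the number of digits of $n$ in base $B$, i.e. $\delta(n)=k$ iff $B^{k-1}\le n<B^k$. Define $\delta'(1)=0$ and $\delta'(a)=\delta(a)$ for $a>1$. If $n=\prod_{i} p_i^{a_i}$ is the prime power factorisation, set $\phi(n)=\sum_i \big(\delta(p_i)+\delta'(a_i)\big)$ (with $\phi(1)=0$), and $h(n)=\delta(n)-\phi(n)$. A positive integer $n$ is $k$-frugal if $h(n)\ge k$ (for $k=0$ this means economical). Dickson's conjecture: for any finite family of linear functions $f_i(x)=a_i x+b_i$ ($i=1,\dots,s$) with integers $a_i\ge1$, $b_i$, if there is no integer $m>1$ dividing $f_1(x)f_2(x)\cdots f_s(x)$ for every integer $x$, then there are infinitely many positive integers $x$ for which $f_1(x),\dots,f_s(x)$ are all prime. *)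

theory Defs
  imports "HOL-Computational_Algebra.Primes"
begin

definition num_digits :: "nat \<Rightarrow> nat \<Rightarrow> nat" where
  "num_digits B n = (LEAST k. n < B ^ k)"

definition num_digits' :: "nat \<Rightarrow> nat \<Rightarrow> nat" where
  "num_digits' B a = (if a = 1 then 0 else num_digits B a)"

definition fact_len :: "nat \<Rightarrow> nat \<Rightarrow> nat" where
  "fact_len B n = (\<Sum>p\<in>prime_factors n. num_digits B p + num_digits' B (multiplicity p n))"

definition h_frugal :: "nat \<Rightarrow> nat \<Rightarrow> int" where
  "h_frugal B n = int (num_digits B n) - int (fact_len B n)"

definition k_frugal :: "nat \<Rightarrow> int \<Rightarrow> nat \<Rightarrow> bool" where
  "k_frugal B k n \<longleftrightarrow> n > 0 \<and> h_frugal B n \<ge> k"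

text \<open>Dickson's conjecture; a family of linear functions a x + b is a list of pairs (a, b).\<close>
definition dickson_conjecture :: bool where
  "dickson_conjecture \<longleftrightarrow>
    (\<forall>fs :: (int \<times> int) list.
       (\<forall>(a, b) \<in> set fs. a \<ge> 1) \<longrightarrow>
       \<not> (\<exists>m::int. m > 1 \<and> (\<forall>x::int. m dvd (\<Prod>(a, b) \<leftarrow> fs. a * x + b))) \<longrightarrow>
       infinite {x::int. x > 0 \<and> (\<forall>(a, b) \<in> set fs. prime (a * x + b))})"

end

theory Submission
  imports Defs "HOL-Number_Theory.Number_Theory"
begin


lemma nd_gt: assumes "B \<ge> 2" shows "n < B ^ num_digits B n"
proof -
  have "n < 2 ^ n" by (rule less_exp)
  also have "(2::nat) ^ n \<le> B ^ n" using assms by (intro power_mono) auto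
  finally have "n < B ^ n" .
  then show ?thesis unfolding num_digits_def by (rule LeastI)
qed

lemma nd_le: "n < B ^ m \<Longrightarrow> num_digits B n \<le> m"
  unfolding num_digits_def by (rule Least_le)

lemma nd_ge: assumes "B \<ge> 2" "B ^ m \<le> n" shows "m < num_digits B n"
proof (rule ccontr)
  assume "\<not> m < num_digits B n"
  then have "B ^ num_digits B n \<le> B ^ m" using assms by (intro power_increasing) auto
  with nd_gt[OF assms(1), of n] assms show False by linarith
qed

lemma nd_mono: assumes "B \<ge> 2" "n \<le> m" shows "num_digits B n \<le> num_digits B m"
  using nd_gt[OF assms(1), of m] assms by (intro nd_le) linarith

lemma nd_pow: "num_digits B (B ^ s) \<le> s + 1" if "B \<ge> 2"
  using that by (intro nd_le) simp

lemma nd_low: assumes "B \<ge> 2" "P \<ge> 1" shows "B ^ (num_digits B P - 1) \<le> P"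
proof (rule ccontr)
  assume "\<not> ?thesis"
  then have "num_digits B P \<le> num_digits B P - 1" by (intro nd_le) simp
  moreover have "num_digits B P \<ge> 1" using nd_ge[OF assms(1), of 0 P] assms by simp
  ultimately show False by linarith
qed

lemma nd_prod: assumes "B \<ge> 2" "B ^ e \<le> Q" "P \<ge> 1"
  shows "e + num_digits B P \<le> num_digits B (Q * P)"
proof -
  have "B ^ (e + (num_digits B P - 1)) = B^e * B ^ (num_digits B P - 1)" by (simp add: power_add)
  also have "\<dots> \<le> Q * P" using nd_low[OF assms(1,3)] assms(2) by (intro mult_mono) auto
  finally have "e + (num_digits B P - 1) < num_digits B (Q * P)" by (rule nd_ge[OF assms(1)])
  moreover have "num_digits B P \<ge> 1" using nd_ge[OF assms(1), of 0 P] assms by simp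
  ultimately show ?thesis by linarith
qed

lemma nd'_le: "num_digits' B a \<le> num_digits B a"
  unfolding num_digits'_def by auto

lemma fl_mult: fixes a b :: nat assumes "coprime a b" "a > 0" "b > 0"
  shows "fact_len B (a * b) = fact_len B a + fact_len B b"
proof -
  have pf: "prime_factors (a*b) = prime_factors a \<union> prime_factors b"
    using assms by (simp add: prime_factors_product)
  have dj: "prime_factors a \<inter> prime_factors b = {}"
  proof (rule ccontr)
    assume "\<not> ?thesis" then obtain p where "p \<in> prime_factors a" "p \<in> prime_factors b" by blast
    then have "p dvd a" "p dvd b" "prime p" by (auto simp: in_prime_factors_iff)
    then show False using assms(1) by (meson coprime_common_divisor not_prime_unit)
  qed
  have ma: "multiplicity p (a*b) = multiplicity p a" if "p \<in> prime_factors a" for p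
  proof -
    have "p \<notin> prime_factors b" using dj that by blast
    then have "\<not> p dvd b" using that assms by (auto simp: in_prime_factors_iff)
    then show ?thesis using that assms
      by (simp add: prime_elem_multiplicity_mult_distrib in_prime_factors_iff not_dvd_imp_multiplicity_0)
  qed
  have mb: "multiplicity p (a*b) = multiplicity p b" if "p \<in> prime_factors b" for p
  proof -
    have "p \<notin> prime_factors a" using dj that by blast
    then have "\<not> p dvd a" using that assms by (auto simp: in_prime_factors_iff)
    then show ?thesis using that assms
      by (simp add: prime_elem_multiplicity_mult_distrib in_prime_factors_iff not_dvd_imp_multiplicity_0)
  qed
  show ?thesis unfolding fact_len_def pf
    by (subst sum.union_disjoint) (auto simp: dj ma mb intro!: sum.cong)
qed

lemma fl_pow: fixes q :: nat assumes "prime q" "e > 0"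
  shows "fact_len B (q ^ e) = num_digits B q + num_digits' B e"
proof -
  have "prime_factors (q ^ e) = {q}" using assms
    by (simp add: prime_factorization_prime_power)
  then show ?thesis using assms unfolding fact_len_def by (simp add: prime_imp_prime_elem)
qed

lemma fl_prime: fixes q :: nat assumes "prime q"
  shows "fact_len B q = num_digits B q"
  using fl_pow[OF assms, of 1 B] by (simp add: num_digits'_def)

lemma two_pow: "2 * s \<le> (2::nat) ^ s"
proof (induction s)
  case (Suc s) then show ?case by (cases s) auto
qed simp

lemma prime_dvd_prod_list_int: fixes p :: int assumes "prime p" "p dvd prod_list xs"
  shows "\<exists>x\<in>set xs. p dvd x"
  using assms(2) assms(1) not_prime_unit[of p] by (induction xs) (auto simp: prime_dvd_mult_iff[OF assms(1)])



lemma two_close: fixes p X i j :: nat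
  assumes "prime p" "p dvd X + i" "p dvd X + j" "i \<noteq> j" "i \<le> t" "j \<le> t" "t < p"
  shows False
proof -
  { fix i j :: nat assume h: "p dvd X + i" "p dvd X + j" "i < j" "j \<le> t"
    then have "p dvd (X + j) - (X + i)" by (intro dvd_diff_nat)
    then have "p dvd j - i" by simp
    then have "p \<le> j - i" using h by (intro dvd_imp_le) auto
    with h assms(7) have False by linarith }
  then show False using assms by (cases "i < j") (auto simp: not_less le_less)
qed

locale constr =
  fixes t e N0 :: nat and q a b :: "nat \<Rightarrow> nat"
  assumes t: "t > 0" and e: "e > 0"
    and q: "\<And>j. j \<in> {1..t} \<Longrightarrow> prime (q j) \<and> q j > t"
    and qinj: "inj_on q {1..t}"
    and RN: "fact t * fact t dvd N0"
    and qN: "\<And>j. j \<in> {1..t} \<Longrightarrow> q j ^ e dvd N0 + j"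
    and a_def: "\<And>j. a j = (fact t * fact t * (\<Prod>l\<in>{1..t}. q l ^ e)) div (j * q j ^ e)"
    and b_def: "\<And>j. b j = (N0 + j) div (j * q j ^ e)"
begin

definition "R = fact t * fact t"
definition "P = (\<Prod>l\<in>{1..t}. q l ^ e)"
definition "K = R * P"

lemma jR: "j \<in> {1..t} \<Longrightarrow> j dvd R"
  unfolding R_def by (intro dvd_mult2) (auto intro: dvd_fact)

lemma Kpos: "K > 0"
  unfolding K_def R_def P_def using q by (auto intro!: prod_pos simp: prime_gt_0_nat)

lemma dK: "j \<in> {1..t} \<Longrightarrow> j * q j ^ e dvd K"
  unfolding K_def P_def by (intro mult_dvd_mono jR) auto

lemma cop_jq: "j \<in> {1..t} \<Longrightarrow> coprime j (q j ^ e)"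
proof -
  assume j: "j \<in> {1..t}"
  have "\<not> q j dvd j" using q[OF j] j by (auto dest: dvd_imp_le)
  then have "coprime (q j) j" using q[OF j] by (intro prime_imp_coprime) auto
  then show ?thesis by (simp add: ac_simps)
qed

lemma dN: "j \<in> {1..t} \<Longrightarrow> j * q j ^ e dvd N0 + j"
proof -
  assume j: "j \<in> {1..t}"
  have "j dvd N0" using jR[OF j] RN unfolding R_def by (rule dvd_trans)
  then have "j dvd N0 + j" by simp
  then show ?thesis using qN[OF j] cop_jq[OF j] by (intro divides_mult)
qed

lemma ident: "j \<in> {1..t} \<Longrightarrow> N0 + K * y + j = (j * q j ^ e) * (a j * y + b j)"
proof -
  assume j: "j \<in> {1..t}"
  have "a j = K div (j * q j ^ e)" unfolding a_def K_def R_def P_def ..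
  then have 1: "K = (j * q j ^ e) * a j" using dK[OF j] by simp
  have 2: "N0 + j = (j * q j ^ e) * b j" using dN[OF j] b_def[of j] by simp
  show ?thesis using 1 2 by (simp add: algebra_simps)
qed

lemma apos: "j \<in> {1..t} \<Longrightarrow> a j \<ge> 1"
proof -
  assume j: "j \<in> {1..t}"
  have "a j = K div (j * q j ^ e)" unfolding a_def K_def R_def P_def ..
  then have "K = (j * q j ^ e) * a j" using dK[OF j] by simp
  then show ?thesis using Kpos by (cases "a j") auto
qed

end




context constr begin

lemma adm_small: assumes "prime p" "p dvd fact t"
  shows "\<exists>y. \<forall>j\<in>{1..t}. \<not> p dvd a j * y + b j"
proof (intro exI[of _ 0] ballI notI)
  fix j assume j: "j \<in> {1..t}" and d: "p dvd a j * 0 + b j"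
  obtain c where c: "N0 = fact t * fact t * c" using RN by blast
  obtain f where f: "fact t = j * f" using j by (metis atLeastAtMost_iff dvd_def dvd_fact)
  have "N0 + K * 0 + j = (j * q j ^ e) * (a j * 0 + b j)" by (rule ident[OF j])
  then have "j * (f * fact t * c + 1) = j * (q j ^ e * b j)" using c f by (simp add: algebra_simps)
  moreover have jne: "j \<noteq> 0" using j by auto
  ultimately have eq: "f * fact t * c + 1 = q j ^ e * b j" using mult_left_cancel[OF jne] by blast
  have "p dvd q j ^ e * b j" using d by simp
  then have "p dvd f * fact t * c + 1" using eq by simp
  moreover have "p dvd f * fact t * c" using assms(2) by simp
  ultimately have "p dvd 1" by (metis dvd_add_right_iff)
  then show False using assms(1) by simp
qed

lemma adm_q: assumes i: "i \<in> {1..t}"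
  shows "\<exists>y. \<forall>j\<in>{1..t}. \<not> q i dvd a j * y + b j"
proof -
  have qi: "prime (q i)" "q i > t" using q[OF i] by auto
  have nf: "\<not> q i dvd fact t" using qi by (simp add: prime_dvd_fact_iff)
  have qK: "q i dvd K" unfolding K_def P_def using i
    by (intro dvd_mult dvd_trans[OF _ dvd_prodI[of _ i]]) (auto simp: e)
  have other: "\<not> q i dvd a j * y + b j" if j: "j \<in> {1..t}" "j \<noteq> i" for j y
  proof
    assume "q i dvd a j * y + b j"
    then have "q i dvd N0 + K * y + j" unfolding ident[OF j(1)] by simp
    then have "q i dvd N0 + j" using qK by (metis add.commute add.left_commute dvd_add_right_iff dvd_mult2)
    moreover have "q i dvd N0 + i" using qN[OF i] e by (meson dvd_power dvd_trans)
    ultimately show False using two_close[OF qi(1), of N0 j i t] j i qi by auto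
  qed
  define P' where "P' = (\<Prod>l\<in>{1..t}-{i}. q l ^ e)"
  obtain f where f: "fact t = i * f" using i by (metis atLeastAtMost_iff dvd_def dvd_fact)
  have KK: "K = (i * q i ^ e) * (f * fact t * P')"
    unfolding K_def R_def P_def P'_def using i f
    by (subst prod.remove[of _ i]) (auto simp: algebra_simps)
  have ai: "a i = f * fact t * P'"
  proof -
    have "a i = K div (i * q i ^ e)" unfolding a_def K_def R_def P_def ..
    then show ?thesis using KK qi i by (simp add: prime_gt_0_nat)
  qed
  have "\<not> q i dvd f" using nf f by auto
  moreover have "\<not> q i dvd P'"
  proof
    assume "q i dvd P'"
    then have "\<exists>l\<in>{1..t}-{i}. q i dvd q l ^ e" unfolding P'_def
      using prime_dvd_prod_iff[of "{1..t}-{i}" "q i" "\<lambda>l. q l ^ e"] qi by simp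
    then obtain l where l: "l \<in> {1..t}-{i}" "q i dvd q l ^ e" by blast
    then have "q i dvd q l" using qi by (auto dest: prime_dvd_power)
    then have "q i = q l" using qi q[of l] l by (auto intro: primes_dvd_imp_eq)
    then show False using qinj i l by (auto dest: inj_onD)
  qed
  ultimately have na: "\<not> q i dvd a i" unfolding ai using qi nf by (simp add: prime_dvd_mult_iff)
  show ?thesis
  proof (cases "q i dvd b i")
    case True
    have "\<not> q i dvd a i * 1 + b i" using True na by (simp add: dvd_add_left_iff)
    then show ?thesis using other by (intro exI[of _ 1]) metis
  next
    case False
    then show ?thesis using other by (intro exI[of _ 0]) (metis add_0 mult_0_right)
  qed
qed

lemma adm_big: assumes "prime p" "\<not> p dvd K"
  shows "\<exists>y. \<forall>j\<in>{1..t}. \<not> p dvd a j * y + b j"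
proof -
  have "coprime p K" using assms by (intro prime_imp_coprime)
  then have "coprime K p" by (simp add: ac_simps)
  then obtain w where w: "[K * w = Suc 0] (mod p)" using cong_solve_coprime_nat by blast
  define y where "y = w * (N0 * (p - 1))"
  have "[K * y = Suc 0 * (N0 * (p - 1))] (mod p)" unfolding y_def mult.assoc[symmetric]
    by (intro cong_mult w cong_refl)
  then have "[N0 + K * y = N0 + N0 * (p - 1)] (mod p)" by (intro cong_add cong_refl) simp
  moreover have "N0 + N0 * (p - 1) = N0 * p" using assms(1) prime_gt_0_nat[of p]
    by (cases p) (auto simp: algebra_simps)
  ultimately have "p dvd N0 + K * y" using cong_dvd_iff by (metis dvd_triv_right)
  have "\<not> p dvd a j * y + b j" if j: "j \<in> {1..t}" for j
  proof
    assume "p dvd a j * y + b j"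
    then have "p dvd N0 + K * y + j" unfolding ident[OF j] by simp
    then have "p dvd j" using \<open>p dvd N0 + K * y\<close> by (simp add: dvd_add_right_iff)
    moreover have "j dvd K" using dK[OF j] by (meson dvd_mult_left)
    ultimately show False using assms(2) dvd_trans by blast
  qed
  then show ?thesis by blast
qed

lemma admissible: assumes "prime p"
  shows "\<exists>y. \<forall>j\<in>{1..t}. \<not> p dvd a j * y + b j"
proof (cases "p dvd K")
  case True
  then have "p dvd fact t \<or> p dvd P" unfolding K_def R_def using assms
    by (auto simp: prime_dvd_mult_iff)
  then show ?thesis
  proof
    assume "p dvd P"
    then obtain i where i: "i \<in> {1..t}" "p dvd q i ^ e" unfolding P_def using assms
      by (auto simp: prime_dvd_prod_iff)
    then have "p dvd q i" using assms by (auto dest: prime_dvd_power)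
    then have "p = q i" using assms q[OF i(1)] by (auto intro: primes_dvd_imp_eq)
    then show ?thesis using adm_q[OF i(1)] by simp
  qed (rule adm_small[OF assms])
next
  case False then show ?thesis by (rule adm_big[OF assms])
qed

end



lemma frugal_piece:
  fixes B j Q e Pp :: nat
  assumes B: "B \<ge> 2" and j: "j \<ge> 1" and Q: "prime Q" "Q \<ge> B" "\<not> Q dvd j" and e: "e > 0"
    and P: "prime Pp" "Pp > Q" "Pp > j"
  shows "int (num_digits B (j*Q^e*Pp)) - int (fact_len B (j*Q^e*Pp))
         \<ge> int e - int (fact_len B j) - int (num_digits B Q) - int (num_digits B e)"
proof -
  have c1: "coprime j (Q^e)"
  proof -
    have "coprime Q j" using Q by (intro prime_imp_coprime)
    then show ?thesis by (simp add: ac_simps)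
  qed
  have "\<not> Pp dvd j * Q^e"
  proof
    assume "Pp dvd j * Q^e"
    then have "Pp dvd j \<or> Pp dvd Q^e" using P by (simp add: prime_dvd_mult_iff)
    then show False
    proof
      assume "Pp dvd j" then show False using P j by (auto dest: dvd_imp_le)
    next
      assume "Pp dvd Q^e" then have "Pp dvd Q" using P by (auto dest: prime_dvd_power)
      then show False using P Q by (auto dest: dvd_imp_le simp: prime_gt_0_nat)
    qed
  qed
  then have "coprime Pp (j*Q^e)" using P by (intro prime_imp_coprime)
  then have c2: "coprime (j*Q^e) Pp" by (simp add: ac_simps)
  have Qp: "Q > 0" "Pp > 0" using Q P by (auto simp: prime_gt_0_nat)
  have fl: "fact_len B (j*Q^e*Pp) = fact_len B j + (num_digits B Q + num_digits' B e) + num_digits B Pp"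
    using fl_mult[OF c2, of B] fl_mult[OF c1, of B] fl_pow[OF Q(1) e, of B] fl_prime[OF P(1), of B] j Qp
    by simp
  have "B ^ e \<le> Q ^ e" using Q by (intro power_mono) auto
  then have d1: "e + num_digits B Pp \<le> num_digits B (Q^e * Pp)" using nd_prod[OF B] Qp by simp
  have "Q^e * Pp \<le> j * Q^e * Pp" using j by simp
  then have d2: "num_digits B (Q^e * Pp) \<le> num_digits B (j*Q^e*Pp)" by (intro nd_mono[OF B])
  have "num_digits' B e \<le> num_digits B e" by (rule nd'_le)
  then show ?thesis using fl d1 d2 by linarith
qed




theorem mainTheorem5:
  fixes B :: nat and k :: int
  assumes "B \<ge> 2" and "k \<ge> 0" and "dickson_conjecture"
  shows "\<forall>t::nat. t > 0 \<longrightarrow> (\<exists>N::nat. N > 0 \<and> (\<forall>i<t. k_frugal B k (N + i)))"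
proof (intro allI impI)
  fix t :: nat assume t: "t > 0"
  note B = assms(1)
  define S0 where "S0 = {p::nat. prime p \<and> p > t + B}"
  have "infinite S0" unfolding S0_def infinite_nat_iff_unbounded
  proof
    fix m
    obtain p where "prime p" "p > max m (t + B)" using bigger_prime by blast
    then show "\<exists>n>m. n \<in> {p. prime p \<and> t + B < p}" by auto
  qed
  then obtain S where S: "finite S" "card S = t" "S \<subseteq> S0" using infinite_arbitrarily_large by blast
  then obtain q where bij: "bij_betw q {1..t} S" using ex_bij_betw_nat_finite_1[OF S(1)] by auto
  have qS: "prime (q j) \<and> q j > t + B" if "j \<in> {1..t}" for j
    using bij_betwE[OF bij] that S(3) unfolding S0_def by auto
  have qinj: "inj_on q {1..t}" using bij by (rule bij_betw_imp_inj_on)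
  define M where "M = (\<Sum>j\<in>{1..t}. fact_len B j + num_digits B (q j))"
  define s where "s = nat k + M + 1"
  define e where "e = B ^ s"
  have e: "e > 0" unfolding e_def using B by simp
  define m where "m = (\<lambda>j::nat. if j = 0 then fact t * fact t else q j ^ e)"
  define u where "u = (\<lambda>j::nat. if j = 0 then 0 else q j ^ e - j)"
  have cfq: "coprime (fact t * fact t) (q j ^ e)" if j: "j \<in> {1..t}" for j
  proof -
    have "\<not> q j dvd fact t" using qS[OF j] by (simp add: prime_dvd_fact_iff)
    then have "coprime (q j) (fact t)" using qS[OF j] by (intro prime_imp_coprime) auto
    then show ?thesis by (simp add: ac_simps)
  qed
  have cqq: "coprime (q i ^ e) (q j ^ e)" if "i \<in> {1..t}" "j \<in> {1..t}" "i \<noteq> j" for i j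
  proof -
    have "q i \<noteq> q j" using qinj that by (auto dest: inj_onD)
    then have "coprime (q i) (q j)" using qS that by (intro primes_coprime) auto
    then show ?thesis by simp
  qed
  have cop: "\<forall>i\<in>{0..t}. \<forall>j\<in>{0..t}. i \<noteq> j \<longrightarrow> coprime (m i) (m j)"
  proof (intro ballI impI)
    fix i j assume ij: "i \<in> {0..t}" "j \<in> {0..t}" "i \<noteq> j"
    show "coprime (m i) (m j)"
    proof (cases "i = 0")
      case True
      then show ?thesis using ij cfq[of j] unfolding m_def by auto
    next
      case False
      note i0 = False
      show ?thesis
      proof (cases "j = 0")
        case True
        then show ?thesis using ij i0 cfq[of i] unfolding m_def by (auto simp: ac_simps)
      next
        case False
        then show ?thesis using ij i0 cqq[of i j] unfolding m_def by auto
      qed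
    qed
  qed
  obtain N0 where N0: "\<forall>i\<in>{0..t}. [N0 = u i] (mod m i)"
    using chinese_remainder_nat[OF _ cop] by auto
  have RN: "fact t * fact t dvd N0"
    using N0[rule_format, of 0] unfolding m_def u_def by (simp add: cong_0_iff)
  have qN: "q j ^ e dvd N0 + j" if j: "j \<in> {1..t}" for j
  proof -
    have c: "[N0 = q j ^ e - j] (mod q j ^ e)" using N0[rule_format, of j] j unfolding m_def u_def by auto
    have "q j \<le> q j ^ e" using qS[OF j] e by (intro self_le_power) (auto simp: prime_gt_0_nat)
    then have le: "j \<le> q j ^ e" using qS[OF j] j by auto
    have "[N0 + j = q j ^ e - j + j] (mod q j ^ e)" using c by (intro cong_add cong_refl)
    then have "[N0 + j = q j ^ e] (mod q j ^ e)" using le by simp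
    then show ?thesis using cong_dvd_iff by (metis dvd_refl)
  qed
  define a where "a = (\<lambda>j. (fact t * fact t * (\<Prod>l\<in>{1..t}. q l ^ e)) div (j * q j ^ e))"
  define b where "b = (\<lambda>j. (N0 + j) div (j * q j ^ e))"
  have qS': "prime (q j) \<and> q j > t" if "j \<in> {1..t}" for j using qS[OF that] by auto
  interpret C: constr t e N0 q a b
    by unfold_locales (use t e qS' qinj RN qN in \<open>auto simp: a_def b_def\<close>)
  define fs where "fs = map (\<lambda>j. (int (a j), int (b j))) [1..<Suc t]"
  have setfs: "set fs = (\<lambda>j. (int (a j), int (b j))) ` {1..t}"
    unfolding fs_def by (auto simp: atLeastLessThanSuc_atLeastAtMost)
  have D: "(\<forall>(a, b) \<in> set fs. a \<ge> 1) \<Longrightarrow>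
       \<not> (\<exists>m::int. m > 1 \<and> (\<forall>x::int. m dvd (\<Prod>(a, b) \<leftarrow> fs. a * x + b))) \<Longrightarrow>
       infinite {x::int. x > 0 \<and> (\<forall>(a, b) \<in> set fs. prime (a * x + b))}"
    using assms(3) unfolding dickson_conjecture_def by blast
  have P1: "\<forall>(a, b) \<in> set fs. a \<ge> 1" using C.apos unfolding setfs by force
  have P2: "\<not> (\<exists>m::int. m > 1 \<and> (\<forall>x::int. m dvd (\<Prod>(a, b) \<leftarrow> fs. a * x + b)))"
  proof
    assume "\<exists>m::int. m > 1 \<and> (\<forall>x::int. m dvd (\<Prod>(a, b) \<leftarrow> fs. a * x + b))"
    then obtain mm :: int where mm: "mm > 1" "\<forall>x::int. mm dvd (\<Prod>(a, b) \<leftarrow> fs. a * x + b)" by blast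
    have "mm \<noteq> 0" "\<not> is_unit mm" using mm(1) by auto
    then obtain p where p: "p dvd mm" "prime p" using prime_divisor_exists by blast
    have pp: "prime (nat p)" using p by simp
    have p0: "p = int (nat p)" using prime_gt_0_int[OF p(2)] by simp
    obtain y where y: "\<forall>j\<in>{1..t}. \<not> nat p dvd a j * y + b j" using C.admissible[OF pp] by blast
    have "p dvd (\<Prod>(a, b) \<leftarrow> fs. a * int y + b)" using mm(2) p(1) dvd_trans by blast
    then obtain z where z: "z \<in> set (map (\<lambda>(a, b). a * int y + b) fs)" "p dvd z"
      using prime_dvd_prod_list_int[OF p(2)] by blast
    have "z \<in> (\<lambda>(a, b). a * int y + b) ` set fs" using z(1) by simp
    then obtain j where j: "j \<in> {1..t}" "z = int (a j) * int y + int (b j)" unfolding setfs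
      by auto
    then have "int (nat p) dvd int (a j * y + b j)" using p0 z(2) by simp
    then have "nat p dvd a j * y + b j" by (simp only: of_nat_dvd_iff)
    with y j show False by blast
  qed
  define X where "X = {x::int. x > 0 \<and> (\<forall>(a, b) \<in> set fs. prime (a * x + b))}"
  have infX: "infinite X" using D[OF P1 P2] unfolding X_def .
  define L where "L = t + (\<Sum>j\<in>{1..t}. q j)"
  have "\<exists>x\<in>X. x > int L"
  proof (rule ccontr)
    assume nx: "\<not> ?thesis"
    have "X \<subseteq> {0..int L}"
    proof
      fix z assume z: "z \<in> X"
      then have "z > 0" unfolding X_def by simp
      moreover have "\<not> z > int L" using z nx by blast
      ultimately show "z \<in> {0..int L}" by simp
    qed
    then show False using infX finite_subset finite_atLeastAtMost_int by blast
  qed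
  then obtain x where x: "x \<in> X" "x > int L" by blast
  define y where "y = nat x"
  have xy: "x = int y" using x unfolding y_def X_def by auto
  have primeP: "prime (a j * y + b j)" if j: "j \<in> {1..t}" for j
  proof -
    have "(int (a j), int (b j)) \<in> set fs" using j unfolding setfs by blast
    then have "prime (int (a j) * x + int (b j))" using x(1) unfolding X_def by auto
    moreover have "int (a j) * x + int (b j) = int (a j * y + b j)" using xy by simp
    ultimately have "prime (int (a j * y + b j))" by metis
    then show ?thesis by (metis nat_int prime_nat_iff_prime)
  qed
  have bigP: "a j * y + b j > L" if j: "j \<in> {1..t}" for j
  proof -
    have "y > L" using x xy by simp
    moreover have "a j * y \<ge> y" using C.apos[OF j] by simp
    ultimately show ?thesis by linarith
  qed
  have qL: "q j \<le> L" if "j \<in> {1..t}" for j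
    unfolding L_def using that by (intro trans_le_add2 member_le_sum) auto
  have fM: "fact_len B j + num_digits B (q j) \<le> M" if "j \<in> {1..t}" for j
    unfolding M_def using that by (intro member_le_sum[where f = "\<lambda>j. fact_len B j + num_digits B (q j)"]) auto
  have nde: "num_digits B e \<le> s + 1" unfolding e_def using B by (rule nd_pow)
  have "2 * s \<le> (2::nat) ^ s" by (rule two_pow)
  also have "(2::nat) ^ s \<le> e" unfolding e_def using B by (intro power_mono) auto
  finally have es: "2 * s \<le> e" .
  show "\<exists>N::nat. N > 0 \<and> (\<forall>i<t. k_frugal B k (N + i))"
  proof (intro exI[of _ "N0 + C.K * y + 1"] conjI allI impI)
    fix i assume i: "i < t"
    define j where "j = Suc i"
    have j: "j \<in> {1..t}" using i unfolding j_def by auto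
    have NN: "N0 + C.K * y + 1 + i = j * q j ^ e * (a j * y + b j)"
      using C.ident[OF j, of y] unfolding j_def by simp
    have "\<not> q j dvd j" using qS[OF j] j by (auto dest: dvd_imp_le)
    then have fr: "int (num_digits B (j*q j^e*(a j * y + b j))) - int (fact_len B (j*q j^e*(a j * y + b j)))
         \<ge> int e - int (fact_len B j) - int (num_digits B (q j)) - int (num_digits B e)"
      using qS[OF j] j primeP[OF j] bigP[OF j] qL[OF j] e
      by (intro frugal_piece[OF B]) (auto simp: L_def)
    have "int e - int (fact_len B j) - int (num_digits B (q j)) - int (num_digits B e) \<ge> k"
    proof -
      have kk: "int (nat k) = k" using assms(2) by simp
      have "e + nat k \<le> e + nat k" by simp
      have "nat k + fact_len B j + num_digits B (q j) + num_digits B e \<le> e"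
      proof -
        have aux: "\<And>(n::nat) f d1 d2 E. f + d1 \<le> M \<Longrightarrow> d2 \<le> n + M + 1 + 1 \<Longrightarrow> 2*(n+M+1) \<le> E \<Longrightarrow> n + f + d1 + d2 \<le> E"
          by arith
        show ?thesis using aux[OF fM[OF j]] nde es unfolding s_def by blast
      qed
      then have "int (nat k) + int (fact_len B j) + int (num_digits B (q j)) + int (num_digits B e) \<le> int e"
        by linarith
      then show ?thesis using kk by linarith
    qed
    then have "h_frugal B (N0 + C.K * y + 1 + i) \<ge> k"
      unfolding h_frugal_def NN using fr by linarith
    moreover have "j * q j ^ e * (a j * y + b j) > 0" using NN by linarith
    ultimately show "k_frugal B k (N0 + C.K * y + 1 + i)" unfolding k_frugal_def NN by simp
  qed simp
qed


end
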